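(* Suppose the conditional gradient algorithm chooses $\theta_k$ by the exact line search $\theta_k\in\arg\min_{\theta\in[0,1]}\{(1-\theta)\mathrm{gap}(x_k,g_k)+\mathcal D(x_k,s_k,\theta)\}$, and $q>1$, $r\in[0,1]$ are such that $(\mathcal D,\mathrm{gap},\mathrm{subopt})$ satisfies the $(q,r)$ weak growth property with some finite $M>0$. Then for $k=0,1,\dots$ \[ \mathrm{subopt}_{k+1}\le\mathrm{subopt}_k\Big(1-\tfrac{q-1}{q}\min\Big\{1,\Big(\tfrac{\mathrm{subopt}_k^{1-r}}{M}\Big)^{\frac1{q-1}}\Big\}\Big). \] If $r=1$ then $\mathrm{subopt}_k\le\mathrm{subopt}_0\big(1-\frac{q-1}{q}\min\{1,M^{-1/(q-1)}\}\big)^k$. If $r\in[0,1)$ then $\mathrm{subopt}_k\le\mathrm{subopt}_0(1-\frac{q-1}{q})^k$ for $k=0,\dots,k_0$, where $k_0$ is the smallest $k$ with $\mathrm{subopt}_k^{1-r}\le M$, and for $k\ge k_0$ \[ \mathrm{subopt}_k\le\Big(\mathrm{subopt}_{k_0}^{\frac{r-1}{q-1}}+\frac{1-r}{q}\cdot\frac{1}{M^{\frac1{q-1}}}(k-k_0)\Big)^{\frac{q-1}{r-1}}. \]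
   Context: Let $f,\Psi:\mathbb{R}^n\to\mathbb{R}\cup\{\infty\}$ be closed proper convex functions such that (A1) $f$ is differentiable on $\mathrm{dom}(\Psi)$, and (A2) for every $x\in\mathrm{dom}(f)$ the set $\arg\min_s\{\langle\nabla f(x),s\rangle+\Psi(s)\}$ is nonempty. $f^*,\Psi^*$ denote convex conjugates; $\arg\min_y\{\langle g,y\rangle+\Psi(y)\}=\partial\Psi^*(-g)$. $D_f(y,x)=f(y)-f(x)-\langle\nabla f(x),y-x\rangle$. $\mathrm{gap}(x,u)=f(x)+\Psi(x)+f^*(u)+\Psi^*(-u)$. $\mathcal{D}(x,s,\theta)=D_f(x+\theta(s-x),x)+\Psi(x+\theta(s-x))-(1-\theta)\Psi(x)-\theta\Psi(s)$. Suboptimality gap: $\mathrm{subopt}(x)=f(x)+\Psi(x)-\min_y\{f(y)+\Psi(y)\}$ for $x\in\mathrm{dom}(\Psi)$ (the minimum assumed attained/finite). Conditional gradient algorithm: given $x_0\in\mathrm{dom}(\Psi)$, for $k=0,1,2,\dots$ let $g_k=\nabla f(x_k)$, pick $s_k\in\arg\min_y\{\langle g_k,y\rangle+\Psi(y)\}$ and $\theta_k\in[0,1]$, and set $x_{k+1}=(1-\theta_k)x_k+\theta_k s_k$. $\mathrm{subopt}_k=\mathrm{subopt}(x_k)$. $(q,r)$ weak growth property ($q>1$, $r\in[0,1]$): there is a finite $M>0$ such that for all $x\in\mathrm{dom}(\Psi)$, $g=\nabla f(x)$, $s\in\partial\Psi^*(-g)$: $\mathcal D(x,s,\theta)\,\mathrm{subopt}(x)^{1-r}\le\frac{M\theta^q}{q}\mathrm{gap}(x,g)$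 for all $\theta\in[0,1]$. *)

theory Defs
  imports "HOL-Analysis.Analysis"
begin

definition edom :: "('a::real_vector \<Rightarrow> ereal) \<Rightarrow> 'a set" where
  "edom f = {x. f x < \<infinity>}"

definition proper_fun :: "('a::real_vector \<Rightarrow> ereal) \<Rightarrow> bool" where
  "proper_fun f \<longleftrightarrow> (\<forall>x. f x \<noteq> -\<infinity>) \<and> (\<exists>x. f x < \<infinity>)"

definition convex_fun :: "('a::real_vector \<Rightarrow> ereal) \<Rightarrow> bool" where
  "convex_fun f \<longleftrightarrow> (\<forall>x y t. 0 \<le> t \<and> t \<le> 1 \<longrightarrow>
      f ((1 - t) *\<^sub>R x + t *\<^sub>R y) \<le> ereal (1 - t) * f x + ereal t * f y)"

definition closed_fun :: "('a::topological_space \<Rightarrow> ereal) \<Rightarrow> bool" where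
  "closed_fun f \<longleftrightarrow> closed {(x, \<mu>::real). f x \<le> ereal \<mu>}"

definition closed_proper_convex :: "('a::real_normed_vector \<Rightarrow> ereal) \<Rightarrow> bool" where
  "closed_proper_convex f \<longleftrightarrow> closed_fun f \<and> proper_fun f \<and> convex_fun f"

definition conj_fun :: "('a::real_inner \<Rightarrow> ereal) \<Rightarrow> 'a \<Rightarrow> ereal" where
  "conj_fun f u = (SUP x. ereal (u \<bullet> x) - f x)"

text \<open>arg min_y { <g,y> + Psi(y) } (= subdifferential of Psi^* at -g).\<close>
definition lin_argmin :: "('a::real_inner \<Rightarrow> ereal) \<Rightarrow> 'a \<Rightarrow> 'a set" where
  "lin_argmin \<Psi> g = {s. \<forall>y. ereal (g \<bullet> s) + \<Psi> s \<le> ereal (g \<bullet> y) + \<Psi> y}"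

definition bregman :: "('a::real_inner \<Rightarrow> ereal) \<Rightarrow> ('a \<Rightarrow> 'a) \<Rightarrow> 'a \<Rightarrow> 'a \<Rightarrow> ereal" where
  "bregman f grad y x = f y - f x - ereal (grad x \<bullet> (y - x))"

definition gap :: "('a::real_inner \<Rightarrow> ereal) \<Rightarrow> ('a \<Rightarrow> ereal) \<Rightarrow> 'a \<Rightarrow> 'a \<Rightarrow> ereal" where
  "gap f \<Psi> x u = f x + \<Psi> x + conj_fun f u + conj_fun \<Psi> (- u)"

definition Dcal :: "('a::real_inner \<Rightarrow> ereal) \<Rightarrow> ('a \<Rightarrow> 'a) \<Rightarrow> ('a \<Rightarrow> ereal)
    \<Rightarrow> 'a \<Rightarrow> 'a \<Rightarrow> real \<Rightarrow> ereal" where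
  "Dcal f grad \<Psi> x s \<theta> =
     bregman f grad (x + \<theta> *\<^sub>R (s - x)) x + \<Psi> (x + \<theta> *\<^sub>R (s - x))
     - ereal (1 - \<theta>) * \<Psi> x - ereal \<theta> * \<Psi> s"

text \<open>Suboptimality gap (meaningful when the minimum is attained and finite).\<close>
definition subopt :: "('a \<Rightarrow> ereal) \<Rightarrow> ('a \<Rightarrow> ereal) \<Rightarrow> 'a \<Rightarrow> real" where
  "subopt f \<Psi> x = real_of_ereal (f x + \<Psi> x) - real_of_ereal (INF y. f y + \<Psi> y)"

text \<open>Power with the convention a^0 = 1 (also for a = 0), unlike powr.\<close>
definition pow0 :: "real \<Rightarrow> real \<Rightarrow> real" where
  "pow0 a b = (if b = 0 then 1 else a powr b)"

definition weak_growth :: "('a::real_inner \<Rightarrow> ereal) \<Rightarrow> ('a \<Rightarrow> 'a) \<Rightarrow> ('a \<Rightarrow> ereal)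
    \<Rightarrow> real \<Rightarrow> real \<Rightarrow> real \<Rightarrow> bool" where
  "weak_growth f grad \<Psi> q r M \<longleftrightarrow>
     (\<forall>x \<in> edom \<Psi>. \<forall>s \<in> lin_argmin \<Psi> (grad x). \<forall>\<theta>. 0 \<le> \<theta> \<and> \<theta> \<le> 1 \<longrightarrow>
        Dcal f grad \<Psi> x s \<theta> * ereal (pow0 (subopt f \<Psi> x) (1 - r))
          \<le> ereal (M * \<theta> powr q / q) * gap f \<Psi> x (grad x))"

end

theory Submission
  imports Defs
begin

lemma real_step:
  fixes S Sn G P q r M :: real and D :: "real \<Rightarrow> real"
  assumes S0: "0 \<le> S" and SG: "S \<le> G" and q: "q>1" and r: "0\<le>r" "r\<le>1" and M: "M>0"
    and D0: "D 0 = 0" and P: "P = pow0 S (1-r)"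
    and ls: "\<And>t. 0\<le>t \<Longrightarrow> t\<le>1 \<Longrightarrow> Sn \<le> S - G + (1-t)*G + D t"
    and wg: "\<And>t. 0\<le>t \<Longrightarrow> t\<le>1 \<Longrightarrow> D t * P \<le> M * t powr q / q * G"
  shows "Sn \<le> S * (1 - (q-1)/q * min 1 ((P/M) powr (1/(q-1))))"
proof (cases "S = 0")
  case True
  then show ?thesis using ls[of 0] D0 by simp
next
  case False
  hence Sp: "S > 0" using S0 by simp
  have Pp: "P > 0" using Sp unfolding P pow0_def by simp
  define c where "c = P/M"
  have cp: "c > 0" using Pp M by (simp add: c_def)
  define e where "e = 1/(q-1)"
  have ep: "e > 0" using q by (simp add: e_def)
  have G0: "G \<ge> 0" using S0 SG by simp
  show ?thesis
  proof (cases "c \<ge> 1")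
    case True
    have "1 \<le> c powr e" using True ep by (simp add: ge_one_powr_ge_zero)
    hence mn: "min 1 ((P/M) powr (1/(q-1))) = 1" by (simp add: c_def e_def)
    have "D 1 * P \<le> M / q * G" using wg[of 1] by simp
    hence "D 1 \<le> M / q * G / P" using Pp by (subst pos_le_divide_eq) auto
    also have "M / q * G / P = G / q / c" using Pp M q by (simp add: c_def field_simps)
    also have "\<dots> \<le> G / q" using divide_left_mono[of 1 c "G/q"] True G0 q cp by simp
    finally have "D 1 \<le> G/q" .
    hence "Sn \<le> S - G + G/q" using ls[of 1] by simp
    also have "\<dots> = S - G * ((q-1)/q)" using q by (simp add: field_simps)
    also have "\<dots> \<le> S - S * ((q-1)/q)" using SG q by (intro diff_left_mono mult_right_mono) auto
    finally show ?thesis by (simp add: mn algebra_simps)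
  next
    case False
    define t where "t = c powr e"
    have tp: "t > 0" using cp by (simp add: t_def)
    have t1: "t < 1" unfolding t_def using False cp ep
      using powr_less_mono2[OF ep, of c 1] by simp
    have mn: "min 1 ((P/M) powr (1/(q-1))) = t" using t1 by (simp add: c_def e_def t_def)
    have "t powr q = t powr (1 + (q-1))" by simp
    also have "\<dots> = t * t powr (q-1)" unfolding powr_add using tp by simp
    also have "t powr (q-1) = c" unfolding t_def using cp q by (simp add: powr_powr e_def)
    finally have tq: "t powr q = t * c" .
    have "D t * P \<le> M * (t*c) / q * G" using wg[of t] tp t1 tq by simp
    also have "\<dots> = (t * G / q) * P" using M by (simp add: c_def field_simps)
    finally have "D t * P \<le> (t * G / q) * P" .
    hence "D t \<le> t * G / q" using Pp by (rule mult_right_le_imp_le)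
    hence "Sn \<le> S - G + (1-t)*G + t*G/q" using ls[of t] tp t1 by simp
    also have "\<dots> = S - t * G * ((q-1)/q)" using q by (simp add: field_simps)
    also have "\<dots> \<le> S - t * S * ((q-1)/q)" using SG q tp by (intro diff_left_mono mult_right_mono) auto
    finally show ?thesis by (simp add: mn algebra_simps)
  qed
qed

locale seqS =
  fixes S :: "nat \<Rightarrow> real" and q r M :: real
  assumes S0: "\<And>k. 0 \<le> S k" and q: "q > 1" and r: "0 \<le> r" "r \<le> 1" and M: "M > 0"
    and step: "\<And>k. S (Suc k) \<le> S k * (1 - (q-1)/q * min 1 ((pow0 (S k) (1-r) / M) powr (1/(q-1))))"
begin

lemma fac_le: "0 \<le> (q-1)/q * min 1 (X powr e)" "(q-1)/q * min 1 (X powr e) \<le> (q-1)/q"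
  "(q-1)/q < 1"
proof -
  show "0 \<le> (q-1)/q * min 1 (X powr e)" using q by (auto intro!: mult_nonneg_nonneg)
  show "(q-1)/q * min 1 (X powr e) \<le> (q-1)/q" using q by (intro mult_left_le) auto
  show "(q-1)/q < 1" using q by simp
qed

lemma mono1: "S (Suc k) \<le> S k"
proof -
  have "S k * (1 - (q-1)/q * min 1 ((pow0 (S k) (1-r) / M) powr (1/(q-1)))) \<le> S k * 1"
    using fac_le(1)[of "pow0 (S k) (1-r) / M" "1/(q-1)"] S0[of k] by (intro mult_left_mono) auto
  thus ?thesis using step[of k] by simp
qed

lemma mono: "k \<le> j \<Longrightarrow> S j \<le> S k"
  using lift_Suc_antimono_le[of S, OF mono1] by blast

lemma part2: assumes "r = 1"
  shows "S k \<le> S 0 * (1 - (q - 1) / q * min 1 (M powr (- 1 / (q - 1)))) ^ k"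
proof -
  define \<rho> where "\<rho> = 1 - (q - 1) / q * min 1 (M powr (- 1 / (q - 1)))"
  have eq: "(1 / M) powr (1/(q-1)) = M powr (- 1 / (q - 1))"
    using M by (simp add: powr_divide powr_minus_divide)
  have st: "S (Suc k) \<le> S k * \<rho>" for k
    using step[of k] assms eq by (simp add: pow0_def \<rho>_def)
  have rho0: "0 \<le> \<rho>" using fac_le(2)[of "M" "- 1 / (q - 1)"] fac_le(3) unfolding \<rho>_def
    by (simp add: powr_minus_divide) 
  show ?thesis unfolding \<rho>_def[symmetric]
  proof (induction k)
    case 0 then show ?case by simp
  next
    case (Suc k)
    have "S (Suc k) \<le> S k * \<rho>" by (rule st)
    also have "\<dots> \<le> S 0 * \<rho> ^ k * \<rho>" using Suc rho0 by (rule mult_right_mono)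
    finally show ?case by (simp add: algebra_simps)
  qed
qed

context
  assumes r1: "r < 1"
begin

lemma pow0_eq: "pow0 x (1-r) = x powr (1-r)" using r1 by (simp add: pow0_def)

lemma big_step: assumes "M < S k powr (1-r)" shows "S (Suc k) \<le> S k * (1 - (q-1)/q)"
proof -
  have "1 < S k powr (1-r) / M" using assms M by simp
  hence "1 \<le> (S k powr (1-r) / M) powr (1/(q-1))" using q by (intro ge_one_powr_ge_zero) auto
  thus ?thesis using step[of k] by (simp add: pow0_eq)
qed

lemma rho0: "1 - (q-1)/q = 1/q" using q by (simp add: field_simps)

lemma exists_small: "\<exists>k. S k powr (1-r) \<le> M"
proof (rule ccontr)
  assume "\<not> ?thesis"
  hence big: "\<And>k. M < S k powr (1-r)" by (simp add: not_le)
  have geo: "S k \<le> S 0 * (1/q)^k" for k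
  proof (induction k)
    case 0 then show ?case by simp
  next
    case (Suc k)
    have "S (Suc k) \<le> S k * (1/q)" using big_step[OF big[of k]] rho0 by simp
    also have "\<dots> \<le> S 0 * (1/q)^k * (1/q)" using Suc q by (intro mult_right_mono) auto
    finally show ?case by (simp add: algebra_simps)
  qed
  define \<delta> where "\<delta> = M powr (1/(1-r))"
  have dp: "\<delta> > 0" using M by (simp add: \<delta>_def)
  have dM: "\<delta> powr (1-r) = M" using M r1 by (simp add: \<delta>_def powr_powr)
  have "S 0 + 1 > 0" using S0[of 0] by simp
  hence "\<delta> / (S 0 + 1) > 0" using dp by simp
  then obtain n where n: "(1/q)^n < \<delta> / (S 0 + 1)" using real_arch_pow_inv[of "\<delta> / (S 0 + 1)" "1/q"] q by auto
  have "S n \<le> S 0 * (1/q)^n" by (rule geo)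
  also have "\<dots> \<le> (S 0 + 1) * (1/q)^n" using q by (intro mult_right_mono) auto
  also have "\<dots> < \<delta>" using n \<open>S 0 + 1 > 0\<close> by (simp add: field_simps)
  finally have "S n powr (1-r) < \<delta> powr (1-r)" using r1 S0[of n] by (intro powr_less_mono2) auto
  thus False using big[of n] dM by simp
qed

lemma part3a: assumes "\<forall>j<k0. \<not> S j powr (1 - r) \<le> M"
  shows "k \<le> k0 \<Longrightarrow> S k \<le> S 0 * (1 - (q - 1) / q) ^ k"
proof (induction k)
  case 0 then show ?case by simp
next
  case (Suc k)
  have "k < k0" using Suc.prems by simp
  hence "\<not> S k powr (1-r) \<le> M" using assms by blast
  hence "S (Suc k) \<le> S k * (1 - (q-1)/q)" by (intro big_step) (simp add: not_le)
  also have "\<dots> \<le> S 0 * (1 - (q - 1) / q) ^ k * (1 - (q-1)/q)"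
    using Suc q by (intro mult_right_mono) auto
  finally show ?case by (simp add: algebra_simps)
qed

lemma bern: fixes u pp :: real assumes "0 \<le> u" "u < 1" "pp > 0" shows "1 + pp * u \<le> (1 - u) powr (- pp)"
proof -
  have "ln (1-u) \<le> (1-u) - 1" using ln_le_minus_one[of "1-u"] assms by simp
  hence "pp*u \<le> pp * (- ln (1-u))" using assms by (intro mult_left_mono) auto
  hence "1 + pp*u \<le> 1 + (- pp * ln (1-u))" by simp
  also have "\<dots> \<le> exp (- pp * ln (1-u))" using exp_ge_add_one_self[of "- pp * ln (1-u)"] by simp
  also have "\<dots> = (1 - u) powr (- pp)" using assms by (simp add: powr_def)
  finally show ?thesis .
qed

lemma part3b: assumes k0: "S k0 powr (1 - r) \<le> M" and kk: "k0 \<le> k"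
  shows "S k \<le> (if S k0 = 0 then 0
                   else (S k0 powr ((r - 1) / (q - 1))
                         + (1 - r) / q * (1 / M powr (1 / (q - 1))) * real (k - k0))
                        powr ((q - 1) / (r - 1)))"
proof (cases "S k0 = 0")
  case True
  then show ?thesis using mono[OF kk] S0[of k] by simp
next
  case False
  hence Sk0: "S k0 > 0" using S0[of k0] by simp
  note stp = step
  define e where "e = 1/(q-1)"
  define pp where "pp = (1-r)/(q-1)"
  define a where "a = (q-1)/q / M powr e"
  have ep: "e > 0" using q by (simp add: e_def)
  have ppp: "pp > 0" using q r1 by (simp add: pp_def)
  have ap: "a > 0" using q M by (simp add: a_def)
  have small: "S n powr (1-r) \<le> M" if "k0 \<le> n" for n
    using k0 mono[OF that] S0[of n] r1 powr_mono2[of "1-r" "S n" "S k0"] by simp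
  have ustep: "S (Suc n) \<le> S n * (1 - a * S n powr pp)" if "k0 \<le> n" "S n > 0" for n
  proof -
    have "S n powr (1-r) / M \<le> 1" using small[OF that(1)] M by simp
    hence "(S n powr (1-r) / M) powr e \<le> 1 powr e" using ep M by (intro powr_mono2) auto
    hence mn: "min 1 ((pow0 (S n) (1-r) / M) powr (1/(q-1))) = (S n powr (1-r) / M) powr e"
      by (simp add: pow0_eq e_def)
    have "(S n powr (1-r) / M) powr e = S n powr pp / M powr e"
      by (simp add: powr_divide powr_powr pp_def e_def)
    hence "(q-1)/q * min 1 ((pow0 (S n) (1-r) / M) powr (1/(q-1))) = a * S n powr pp"
      using mn by (simp add: a_def)
    thus ?thesis using step[of n] by simp
  qed
  have claim: "S n = 0 \<or> S k0 powr (- pp) + pp*a*real(n-k0) \<le> S n powr (- pp)" if "k0 \<le> n" for n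
    using that
  proof (induction n rule: dec_induct)
    case base then show ?case by simp
  next
    case (step n)
    show ?case
    proof (cases "S (Suc n) = 0")
      case True then show ?thesis by simp
    next
      case False
      hence Sn1: "S (Suc n) > 0" using S0[of "Suc n"] by simp
      have Snp: "S n > 0"
      proof (rule ccontr)
        assume "\<not> S n > 0" hence "S n = 0" using S0[of n] by simp
        thus False using Sn1 mono1[of n] by simp
      qed
      define u where "u = (q-1)/q * min 1 ((pow0 (S n) (1-r) / M) powr (1/(q-1)))"
      have u0: "0 \<le> u" "u < 1" unfolding u_def by (rule fac_le(1), rule le_less_trans[OF fac_le(2) fac_le(3)])
      have ua: "u = a * S n powr pp"
      proof -
        have "S n powr (1-r) / M \<le> 1" using small[OF step(1)] M by simp
        hence "(S n powr (1-r) / M) powr e \<le> 1 powr e" using ep M by (intro powr_mono2) auto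
        hence mn: "min 1 ((pow0 (S n) (1-r) / M) powr (1/(q-1))) = (S n powr (1-r) / M) powr e"
          by (simp add: pow0_eq e_def)
        have "(S n powr (1-r) / M) powr e = S n powr pp / M powr e"
          by (simp add: powr_divide powr_powr pp_def e_def)
        thus ?thesis using mn by (simp add: a_def u_def)
      qed
      have st: "S (Suc n) \<le> S n * (1 - u)" using stp[of n] u_def by simp
      have pos: "S n * (1 - u) > 0" using Snp u0 by simp
      have "S n powr (-pp) + pp * a = S n powr (-pp) * (1 + pp * u)"
      proof -
        have "S n powr (-pp) * S n powr pp = 1" using Snp by (simp flip: powr_add)
        thus ?thesis unfolding ua by (simp add: algebra_simps)
      qed
      also have "\<dots> \<le> S n powr (-pp) * (1 - u) powr (-pp)"
        using bern[OF u0 ppp] by (intro mult_left_mono) auto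
      also have "\<dots> = (S n * (1 - u)) powr (-pp)" using Snp u0 by (simp add: powr_mult)
      also have "\<dots> \<le> S (Suc n) powr (-pp)" using ppp Sn1 st by (intro powr_mono2') auto
      finally have A: "S n powr (-pp) + pp * a \<le> S (Suc n) powr (-pp)" .
      have IH: "S k0 powr (- pp) + pp*a*real(n-k0) \<le> S n powr (- pp)" using step.IH Snp by auto
      have "real (Suc n - k0) = real (n-k0) + 1" using step(1) by simp
      hence "S k0 powr (- pp) + pp*a*real(Suc n-k0) = S k0 powr (- pp) + pp*a*real(n-k0) + pp*a"
        by (simp add: algebra_simps)
      thus ?thesis using A IH by simp
    qed
  qed
  define B where "B = S k0 powr (- pp) + pp*a*real(k-k0)"
  have Bp: "B > 0" unfolding B_def using Sk0 ppp ap by (intro add_pos_nonneg) auto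
  have eq1: "(r - 1) / (q - 1) = - pp" unfolding pp_def by (simp add: divide_simps)
  have eq2: "(1 - r) / q * (1 / M powr (1 / (q - 1))) = pp * a"
  proof -
    have h: "q - 1 \<noteq> 0" "M powr (1/(q-1)) \<noteq> 0" "q \<noteq> 0" using q M by auto
    show ?thesis unfolding pp_def a_def e_def using h by (simp add: divide_simps)
  qed
  have eq3: "(q - 1) / (r - 1) = - (1/pp)" using q r1 by (simp add: pp_def field_simps)
  have goal: "S k \<le> B powr (- (1/pp))"
  proof (cases "S k = 0")
    case True then show ?thesis by simp
  next
    case False
    hence Skp: "S k > 0" using S0[of k] by simp
    have "B \<le> S k powr (-pp)" using claim[OF kk] False by (simp add: B_def)
    hence "(S k powr (-pp)) powr (- (1/pp)) \<le> B powr (- (1/pp))"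
      using Bp ppp by (intro powr_mono2') auto
    moreover have "(S k powr (-pp)) powr (- (1/pp)) = S k" using Skp ppp by (simp add: powr_powr)
    ultimately show ?thesis by simp
  qed
  show ?thesis using goal False unfolding B_def eq1 eq2 eq3 by simp
qed

end


lemma part3: "r < 1 \<longrightarrow>
            (\<exists>k. S k powr (1 - r) \<le> M) \<and>
            (\<forall>k0. S k0 powr (1 - r) \<le> M \<and>
                  (\<forall>j < k0. \<not> S j powr (1 - r) \<le> M) \<longrightarrow>
               (\<forall>k \<le> k0. S k \<le> S 0 * (1 - (q - 1) / q) ^ k) \<and>
               (\<forall>k \<ge> k0. S k \<le>
                  (if S k0 = 0 then 0
                   else (S k0 powr ((r - 1) / (q - 1))
                         + (1 - r) / q * (1 / M powr (1 / (q - 1))) * real (k - k0))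
                        powr ((q - 1) / (r - 1)))))"
apply (rule impI, rule conjI)
   apply (erule exists_small)
  apply (intro allI impI conjI)
  subgoal for k0 k by (rule part3a) auto
  subgoal for k0 k by (rule part3b) auto
  done

end

lemma ereal_fin: "(a::ereal) \<noteq> -\<infinity> \<Longrightarrow> a < \<infinity> \<Longrightarrow> a = ereal (real_of_ereal a)"
  by (cases a) auto

lemma grad_ineq:
  fixes f :: "'a::real_inner \<Rightarrow> ereal"
  assumes cvx: "convex_fun f" and nm: "\<And>z. f z \<noteq> -\<infinity>" and fx: "f x < \<infinity>" and fy: "f y < \<infinity>"
    and der: "((\<lambda>z. real_of_ereal (f z)) has_derivative (\<lambda>h. g \<bullet> h)) (at x)"
  shows "real_of_ereal (f x) + g \<bullet> (y - x) \<le> real_of_ereal (f y)"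
proof -
  define fr where "fr z = real_of_ereal (f z)" for z
  define \<phi> where "\<phi> t = fr (x + t *\<^sub>R (y - x))" for t
  have efx: "f x = ereal (fr x)" using ereal_fin[OF nm fx] by (simp add: fr_def)
  have efy: "f y = ereal (fr y)" using ereal_fin[OF nm fy] by (simp add: fr_def)
  have bound: "(\<phi> t - \<phi> 0) / t \<le> fr y - fr x" if t: "0 < t" "t \<le> 1" for t
  proof -
    have "f ((1 - t) *\<^sub>R x + t *\<^sub>R y) \<le> ereal (1 - t) * f x + ereal t * f y"
      using cvx t unfolding convex_fun_def by auto
    also have "\<dots> = ereal ((1-t) * fr x + t * fr y)" by (simp add: efx efy)
    finally have le: "f (x + t *\<^sub>R (y - x)) \<le> ereal ((1-t) * fr x + t * fr y)"
      by (simp add: algebra_simps)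
    have "\<phi> t \<le> (1-t) * fr x + t * fr y"
      using le nm[of "x + t *\<^sub>R (y - x)"] unfolding \<phi>_def fr_def
      by (cases "f (x + t *\<^sub>R (y - x))") auto
    hence "\<phi> t - \<phi> 0 \<le> t * (fr y - fr x)" by (simp add: \<phi>_def algebra_simps)
    thus ?thesis using t by (simp add: divide_le_eq mult.commute)
  qed
  have d1: "((\<lambda>t. x + t *\<^sub>R (y - x)) has_derivative (\<lambda>t. t *\<^sub>R (y - x))) (at 0)"
    by (auto intro!: derivative_eq_intros)
  have d2: "(fr has_derivative (\<lambda>h. g \<bullet> h)) (at (x + 0 *\<^sub>R (y - x)))"
    using der unfolding fr_def[abs_def] by simp
  have "((fr \<circ> (\<lambda>t. x + t *\<^sub>R (y - x))) has_derivative ((\<lambda>h. g \<bullet> h) \<circ> (\<lambda>t. t *\<^sub>R (y - x)))) (at 0)"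
    by (rule diff_chain_at[OF d1 d2])
  moreover have "(\<lambda>h. g \<bullet> h) \<circ> (\<lambda>t. t *\<^sub>R (y - x)) = (*) (g \<bullet> (y - x))"
    by (auto simp: fun_eq_iff)
  ultimately have "(\<phi> has_real_derivative (g \<bullet> (y - x))) (at 0)"
    unfolding has_field_derivative_def \<phi>_def by (simp add: o_def)
  hence "(\<phi> has_real_derivative (g \<bullet> (y - x))) (at 0 within {0<..})"
    by (rule has_field_derivative_at_within)
  hence lim: "((\<lambda>t. (\<phi> t - \<phi> 0) / (t - 0)) \<longlongrightarrow> g \<bullet> (y - x)) (at_right 0)"
    unfolding has_field_derivative_iff .
  have "eventually (\<lambda>t. t \<in> {0<..<1}) (at_right (0::real))" by (rule eventually_at_right_real) simp
  then have ev: "eventually (\<lambda>t. (\<phi> t - \<phi> 0) / (t - 0) \<le> fr y - fr x) (at_right (0::real))"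
    by eventually_elim (auto intro: bound)
  have "g \<bullet> (y - x) \<le> fr y - fr x"
    by (rule tendsto_upperbound[OF lim ev]) (simp add: trivial_limit_at_right_real)
  thus ?thesis by (simp add: fr_def)
qed

lemma conj_grad:
  fixes f :: "'a::real_inner \<Rightarrow> ereal"
  assumes cvx: "convex_fun f" and nm: "\<And>z. f z \<noteq> -\<infinity>" and fx: "f x < \<infinity>"
    and der: "((\<lambda>z. real_of_ereal (f z)) has_derivative (\<lambda>h. g \<bullet> h)) (at x)"
  shows "conj_fun f g = ereal (g \<bullet> x - real_of_ereal (f x))"
  unfolding conj_fun_def
proof (rule antisym)
  have efx: "f x = ereal (real_of_ereal (f x))" using ereal_fin[OF nm fx] .
  show "(SUP y. ereal (g \<bullet> y) - f y) \<le> ereal (g \<bullet> x - real_of_ereal (f x))"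
  proof (rule SUP_least)
    fix y
    show "ereal (g \<bullet> y) - f y \<le> ereal (g \<bullet> x - real_of_ereal (f x))"
    proof (cases "f y = \<infinity>")
      case True then show ?thesis by simp
    next
      case False
      hence fy: "f y < \<infinity>" by (simp add: less_top)
      have efy: "f y = ereal (real_of_ereal (f y))" using ereal_fin[OF nm fy] .
      have "real_of_ereal (f x) + g \<bullet> (y - x) \<le> real_of_ereal (f y)"
        by (rule grad_ineq[OF cvx nm fx fy der])
      hence "g \<bullet> y - real_of_ereal (f y) \<le> g \<bullet> x - real_of_ereal (f x)"
        by (simp add: inner_diff_right)
      thus ?thesis by (subst efy) simp
    qed
  qed
  show "ereal (g \<bullet> x - real_of_ereal (f x)) \<le> (SUP y. ereal (g \<bullet> y) - f y)"
  proof -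
    have "ereal (g \<bullet> x) - f x = ereal (g \<bullet> x - real_of_ereal (f x))" by (subst efx) simp
    thus ?thesis by (intro SUP_upper2[of x]) auto
  qed
qed

lemma argmin_fin:
  assumes pr: "proper_fun \<Psi>" and s: "s \<in> lin_argmin \<Psi> g"
  shows "\<Psi> s < \<infinity>"
proof -
  obtain y where y: "\<Psi> y < \<infinity>" using pr unfolding proper_fun_def by auto
  have "ereal (g \<bullet> s) + \<Psi> s \<le> ereal (g \<bullet> y) + \<Psi> y" using s unfolding lin_argmin_def by auto
  also have "\<dots> < \<infinity>" using y by simp
  finally show ?thesis by (cases "\<Psi> s") auto
qed

lemma conj_argmin:
  assumes pr: "proper_fun \<Psi>" and s: "s \<in> lin_argmin \<Psi> g"
  shows "conj_fun \<Psi> (-g) = ereal (- (g \<bullet> s) - real_of_ereal (\<Psi> s))"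
  unfolding conj_fun_def
proof (rule antisym)
  have nm: "\<And>z. \<Psi> z \<noteq> -\<infinity>" using pr unfolding proper_fun_def by auto
  have eps: "\<Psi> s = ereal (real_of_ereal (\<Psi> s))" using ereal_fin[OF nm argmin_fin[OF pr s]] .
  show "(SUP y. ereal (- g \<bullet> y) - \<Psi> y) \<le> ereal (- (g \<bullet> s) - real_of_ereal (\<Psi> s))"
  proof (rule SUP_least)
    fix y
    show "ereal (- g \<bullet> y) - \<Psi> y \<le> ereal (- (g \<bullet> s) - real_of_ereal (\<Psi> s))"
    proof (cases "\<Psi> y = \<infinity>")
      case True then show ?thesis by simp
    next
      case False
      hence fy: "\<Psi> y < \<infinity>" by (simp add: less_top)
      have epy: "\<Psi> y = ereal (real_of_ereal (\<Psi> y))" using ereal_fin[OF nm fy] .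
      have "ereal (g \<bullet> s) + \<Psi> s \<le> ereal (g \<bullet> y) + \<Psi> y" using s unfolding lin_argmin_def by auto
      hence "g \<bullet> s + real_of_ereal (\<Psi> s) \<le> g \<bullet> y + real_of_ereal (\<Psi> y)"
        by (subst (asm) eps, subst (asm) epy) simp
      thus ?thesis by (subst epy) simp
    qed
  qed
  show "ereal (- (g \<bullet> s) - real_of_ereal (\<Psi> s)) \<le> (SUP y. ereal (- g \<bullet> y) - \<Psi> y)"
  proof -
    have "ereal (- g \<bullet> s) - \<Psi> s = ereal (- (g \<bullet> s) - real_of_ereal (\<Psi> s))" by (subst eps) simp
    thus ?thesis by (intro SUP_upper2[of s]) auto
  qed
qed

theorem theorem3:
  fixes f \<Psi> :: "real^'n \<Rightarrow> ereal"
    and grad :: "real^'n \<Rightarrow> real^'n"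
    and x s :: "nat \<Rightarrow> real^'n"
    and \<theta> :: "nat \<Rightarrow> real"
    and q r M :: real
  assumes f_cpc: "closed_proper_convex f"
    and Psi_cpc: "closed_proper_convex \<Psi>"
    and A1: "\<forall>y \<in> edom \<Psi>. y \<in> interior (edom f) \<and>
               ((\<lambda>z. real_of_ereal (f z)) has_derivative (\<lambda>h. grad y \<bullet> h)) (at y)"
    and A2: "\<forall>y \<in> edom \<Psi>. lin_argmin \<Psi> (grad y) \<noteq> {}"
    and min_attained: "\<exists>xs \<in> edom \<Psi>. \<forall>y. f xs + \<Psi> xs \<le> f y + \<Psi> y"
    and x0: "x 0 \<in> edom \<Psi>"
    and s_def: "\<forall>k. s k \<in> lin_argmin \<Psi> (grad (x k))"
    and x_step: "\<forall>k. x (Suc k) = (1 - \<theta> k) *\<^sub>R x k + \<theta> k *\<^sub>R s k"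
    and linesearch: "\<forall>k. 0 \<le> \<theta> k \<and> \<theta> k \<le> 1 \<and>
        (\<forall>t. 0 \<le> t \<and> t \<le> 1 \<longrightarrow>
           ereal (1 - \<theta> k) * gap f \<Psi> (x k) (grad (x k)) + Dcal f grad \<Psi> (x k) (s k) (\<theta> k)
           \<le> ereal (1 - t) * gap f \<Psi> (x k) (grad (x k)) + Dcal f grad \<Psi> (x k) (s k) t)"
    and q: "q > 1" and r: "0 \<le> r" "r \<le> 1"
    and M: "M > 0"
    and growth: "weak_growth f grad \<Psi> q r M"
  shows "(\<forall>k. subopt f \<Psi> (x (Suc k)) \<le> subopt f \<Psi> (x k) *
              (1 - (q - 1) / q * min 1 ((pow0 (subopt f \<Psi> (x k)) (1 - r) / M) powr (1 / (q - 1)))))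
       \<and> (r = 1 \<longrightarrow> (\<forall>k. subopt f \<Psi> (x k) \<le> subopt f \<Psi> (x 0) *
              (1 - (q - 1) / q * min 1 (M powr (- 1 / (q - 1)))) ^ k))
       \<and> (r < 1 \<longrightarrow>
            (\<exists>k. subopt f \<Psi> (x k) powr (1 - r) \<le> M) \<and>
            (\<forall>k0. subopt f \<Psi> (x k0) powr (1 - r) \<le> M \<and>
                  (\<forall>j < k0. \<not> subopt f \<Psi> (x j) powr (1 - r) \<le> M) \<longrightarrow>
               (\<forall>k \<le> k0. subopt f \<Psi> (x k) \<le> subopt f \<Psi> (x 0) * (1 - (q - 1) / q) ^ k) \<and>
               (\<forall>k \<ge> k0. subopt f \<Psi> (x k) \<le>
                  (if subopt f \<Psi> (x k0) = 0 then 0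
                   else (subopt f \<Psi> (x k0) powr ((r - 1) / (q - 1))
                         + (1 - r) / q * (1 / M powr (1 / (q - 1))) * real (k - k0))
                        powr ((q - 1) / (r - 1))))))"
proof -
  have nmf: "\<And>z. f z \<noteq> -\<infinity>" and nmP: "\<And>z. \<Psi> z \<noteq> -\<infinity>"
    using f_cpc Psi_cpc unfolding closed_proper_convex_def proper_fun_def by auto
  have cvxf: "convex_fun f" and cvxP: "convex_fun \<Psi>" and prP: "proper_fun \<Psi>"
    using f_cpc Psi_cpc unfolding closed_proper_convex_def by auto
  define fr where "fr z = real_of_ereal (f z)" for z
  define pr where "pr z = real_of_ereal (\<Psi> z)" for z
  have finP: "\<Psi> y = ereal (pr y)" if "y \<in> edom \<Psi>" for y
    using ereal_fin[OF nmP, of y] that unfolding edom_def pr_def by auto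
  have finf: "f y = ereal (fr y)" if "y \<in> edom \<Psi>" for y
  proof -
    have "y \<in> edom f" using A1 that interior_subset by blast
    thus ?thesis using ereal_fin[OF nmf, of y] unfolding edom_def fr_def by auto
  qed
  have derf: "((\<lambda>z. real_of_ereal (f z)) has_derivative (\<lambda>h. grad y \<bullet> h)) (at y)" if "y \<in> edom \<Psi>" for y
    using A1 that by blast
  have fless: "f y < \<infinity>" if "y \<in> edom \<Psi>" for y using finf[OF that] by simp
  have sdom: "s' \<in> edom \<Psi>" if "s' \<in> lin_argmin \<Psi> g" for s' g
    using argmin_fin[OF prP that] unfolding edom_def by simp
  have cvxdom: "(1-t) *\<^sub>R a + t *\<^sub>R b \<in> edom \<Psi>"
    if "a \<in> edom \<Psi>" "b \<in> edom \<Psi>" "0 \<le> t" "t \<le> 1" for a b t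
  proof -
    have "\<Psi> ((1-t) *\<^sub>R a + t *\<^sub>R b) \<le> ereal (1-t) * \<Psi> a + ereal t * \<Psi> b"
      using cvxP that unfolding convex_fun_def by auto
    also have "\<dots> = ereal ((1-t) * pr a + t * pr b)" using finP that by simp
    finally show ?thesis unfolding edom_def by (auto simp: le_less_trans)
  qed
  obtain xs where xs: "xs \<in> edom \<Psi>" "\<forall>y. f xs + \<Psi> xs \<le> f y + \<Psi> y" using min_attained by blast
  define Fmin where "Fmin = fr xs + pr xs"
  have INF: "(INF y. f y + \<Psi> y) = ereal Fmin"
  proof (rule antisym)
    show "(INF y. f y + \<Psi> y) \<le> ereal Fmin" 
      by (rule INF_lower2[of xs]) (auto simp: Fmin_def finf[OF xs(1)] finP[OF xs(1)])
    show "ereal Fmin \<le> (INF y. f y + \<Psi> y)"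
      using xs(2) by (auto intro!: INF_greatest simp: Fmin_def finf[OF xs(1)] finP[OF xs(1)])
  qed
  have subopt_eq: "subopt f \<Psi> y = fr y + pr y - Fmin" if "y \<in> edom \<Psi>" for y
    unfolding subopt_def INF using finf[OF that] finP[OF that] by simp
  have xdom: "x k \<in> edom \<Psi>" for k
  proof (induction k)
    case 0 then show ?case by (rule x0)
  next
    case (Suc k)
    show ?case unfolding x_step[rule_format]
      using cvxdom[OF Suc sdom[OF s_def[rule_format]]] linesearch by auto
  qed
  define S where "S k = subopt f \<Psi> (x k)" for k
  have S0: "0 \<le> S k" for k
  proof -
    have "f xs + \<Psi> xs \<le> f (x k) + \<Psi> (x k)" using xs(2) by auto
    hence "Fmin \<le> fr (x k) + pr (x k)"
      using finf[OF xs(1)] finP[OF xs(1)] finf[OF xdom[of k]] finP[OF xdom[of k]] by (simp add: Fmin_def)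
    thus ?thesis unfolding S_def subopt_eq[OF xdom] by simp
  qed
  have stepS: "S (Suc k) \<le> S k * (1 - (q-1)/q * min 1 ((pow0 (S k) (1-r) / M) powr (1/(q-1))))" for k
  proof -
    define g where "g = grad (x k)"
    define xk where "xk = x k"
    define sk where "sk = s k"
    define th where "th = \<theta> k"
    have xkd: "xk \<in> edom \<Psi>" using xdom by (simp add: xk_def)
    have skl: "sk \<in> lin_argmin \<Psi> g" using s_def by (simp add: sk_def g_def xk_def)
    have skd: "sk \<in> edom \<Psi>" using sdom[OF skl] .
    define z where "z t = xk + t *\<^sub>R (sk - xk)" for t
    have zdom: "z t \<in> edom \<Psi>" if "0 \<le> t" "t \<le> 1" for t
    proof -
      have "z t = (1-t) *\<^sub>R xk + t *\<^sub>R sk" by (simp add: z_def algebra_simps)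
      thus ?thesis using cvxdom[OF xkd skd that] by simp
    qed
    define G where "G = pr xk + g \<bullet> (xk - sk) - pr sk"
    have gxk: "grad xk = g" by (simp add: g_def xk_def)
    have gapeq: "gap f \<Psi> xk g = ereal G"
      unfolding gap_def conj_grad[OF cvxf nmf fless[OF xkd] derf[OF xkd, unfolded gxk]]
        conj_argmin[OF prP skl] fr_def[symmetric] pr_def[symmetric]
      using finf[OF xkd] finP[OF xkd] finP[OF skd] by (simp add: G_def inner_diff_right)
    define Dr where "Dr t = fr (z t) - fr xk - g \<bullet> (z t - xk) + pr (z t) - (1-t) * pr xk - t * pr sk" for t
    have Deq: "Dcal f grad \<Psi> xk sk t = ereal (Dr t)" if "0 \<le> t" "t \<le> 1" for t
      unfolding Dcal_def bregman_def z_def[symmetric] g_def[symmetric]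
      using finf[OF xkd] finP[OF xkd] finP[OF skd] finf[OF zdom[OF that]] finP[OF zdom[OF that]]
      by (simp add: Dr_def gxk)
    have D0: "Dr 0 = 0" by (simp add: Dr_def z_def)
    have th01: "0 \<le> th" "th \<le> 1" using linesearch by (auto simp: th_def)
    have xS: "x (Suc k) = z th" using x_step by (simp add: z_def th_def xk_def sk_def algebra_simps)
    have Sk: "S k = fr xk + pr xk - Fmin" unfolding S_def xk_def using subopt_eq[OF xdom] .
    have Sk1: "S (Suc k) = fr (z th) + pr (z th) - Fmin" unfolding S_def xS using subopt_eq[OF zdom[OF th01]] .
    have ident: "S (Suc k) = S k - th * G + Dr th"
      unfolding Sk Sk1 Dr_def G_def z_def by (simp add: inner_diff_right algebra_simps)
    have ls: "S (Suc k) \<le> S k - G + (1-t)*G + Dr t" if "0 \<le> t" "t \<le> 1" for t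
    proof -
      have "ereal (1 - th) * gap f \<Psi> xk g + Dcal f grad \<Psi> xk sk th
           \<le> ereal (1 - t) * gap f \<Psi> xk g + Dcal f grad \<Psi> xk sk t"
        using linesearch that by (simp add: th_def xk_def sk_def g_def)
      hence "(1 - th) * G + Dr th \<le> (1-t) * G + Dr t" using Deq[OF th01] Deq[OF that] gapeq by simp
      thus ?thesis using ident by (simp add: algebra_simps)
    qed
    have SG: "S k \<le> G"
    proof -
      have a: "fr xk + g \<bullet> (xs - xk) \<le> fr xs"
        using grad_ineq[OF cvxf nmf fless[OF xkd] fless[OF xs(1)] derf[OF xkd, unfolded gxk]]
        by (simp add: fr_def)
      have "ereal (g \<bullet> sk) + \<Psi> sk \<le> ereal (g \<bullet> xs) + \<Psi> xs" using skl unfolding lin_argmin_def by auto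
      hence b: "g \<bullet> sk + pr sk \<le> g \<bullet> xs + pr xs" using finP[OF skd] finP[OF xs(1)] by simp
      show ?thesis using a b unfolding Sk G_def Fmin_def by (simp add: inner_diff_right)
    qed
    have wg: "Dr t * pow0 (S k) (1-r) \<le> M * t powr q / q * G" if "0 \<le> t" "t \<le> 1" for t
    proof -
      have "Dcal f grad \<Psi> xk sk t * ereal (pow0 (subopt f \<Psi> xk) (1 - r))
          \<le> ereal (M * t powr q / q) * gap f \<Psi> xk (grad xk)"
      proof -
        have skl': "sk \<in> lin_argmin \<Psi> (grad xk)" using skl gxk by simp
        show ?thesis using growth unfolding weak_growth_def using xkd skl' that by blast
      qed
      thus ?thesis using Deq[OF that] gapeq by (simp add: S_def xk_def g_def)
    qed
    show ?thesis by (rule real_step[OF S0 SG q r M D0 refl ls wg])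
  qed
  interpret seqS S q r M using S0 q r M stepS by unfold_locales auto
  have c1: "\<forall>k. S (Suc k) \<le> S k * (1 - (q-1)/q * min 1 ((pow0 (S k) (1-r) / M) powr (1/(q-1))))"
    using stepS by blast
  have c2: "r = 1 \<longrightarrow> (\<forall>k. S k \<le> S 0 * (1 - (q - 1) / q * min 1 (M powr (- 1 / (q - 1)))) ^ k)"
    using part2 by blast
  have c3: "r < 1 \<longrightarrow>
            (\<exists>k. S k powr (1 - r) \<le> M) \<and>
            (\<forall>k0. S k0 powr (1 - r) \<le> M \<and>
                  (\<forall>j < k0. \<not> S j powr (1 - r) \<le> M) \<longrightarrow>
               (\<forall>k \<le> k0. S k \<le> S 0 * (1 - (q - 1) / q) ^ k) \<and>
               (\<forall>k \<ge> k0. S k \<le>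
                  (if S k0 = 0 then 0
                   else (S k0 powr ((r - 1) / (q - 1))
                         + (1 - r) / q * (1 / M powr (1 / (q - 1))) * real (k - k0))
                        powr ((q - 1) / (r - 1)))))"
    by (rule part3)
  show ?thesis using conjI[OF c1 conjI[OF c2 c3]] unfolding S_def .
qed

end
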